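(* Let $I\subsetneq\mathbb{N}$ be infinite, $I=I^+\sqcup I^-$ a partition, and $J=\mathbb{N}\setminus I$. For each $j\in J$ let $d_j\in E$ be a linear combination of monomials of odd length, each of which is a product of generators $e_i$ with $i\in I$ and contains an even number of factors $e_i$ with $i\in I^-$. Let $\varphi\in\mathrm{Aut}(E)$, $\varphi^2=\mathrm{id}$, be the automorphism given on generators by $\varphi(e_i)=e_i$ for $i\in I^+$, $\varphi(e_i)=-e_i$ for $i\in I^-$, and $\varphi(e_i)=-e_i+2d_i$ for $i\in J$. Then $E_\varphi$ is $\mathbb{Z}_2$-isomorphic to one of the superalgebras $E_\infty$, $E_{k^\ast}$ or $E_k$ for some $k$.
   Context: $F$ is a field of characteristic zero, $L$ an infinite-dimensional $F$-vector space with basis $e_1,e_2,\ldots$, $E$ its Grassmann algebra (basis $1$ and monomials $e_{i_1}\cdots e_{i_m}$, $i_1<\cdots<i_m$, with $e_ie_j=-e_je_i$). $E_\varphi$ is the $\mathbb{Z}_2$-grading on $E$ by eigenspaces of $\varphi$ for eigenvalues $1$ (degree 0) and $-1$ (degree 1). Homogeneous gradings: $E_k$ has $e_1,\ldots,e_k$ of degree $0$ and the other $e_i$ of degree $1$; $E_{k^\ast}$ has $e_1,\ldots,e_k$ of degree $1$ and the others of degree $0$; $E_\infty$ has $e_i$ of degree $0$ for $i$ even and $1$ for $i$ odd. Two superalgebras are $\mathbb{Z}_2$-isomorphic if there is an algebra isomorphism mapping the degree-$i$ component onto the degree-$i$ component, $i=0,1$. *)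

theory Defs
  imports Main
begin

text \<open>An element is a function from finite sets of indices (monomials
  e_{i_1}...e_{i_m}, i_1 < ... < i_m) to coefficients with finite support.\<close>

type_synonym 'a grass = "nat set \<Rightarrow> 'a"

definition gE :: "'a::field grass set" where
  "gE = {x. finite {S. x S \<noteq> 0} \<and> (\<forall>S. x S \<noteq> 0 \<longrightarrow> finite S)}"

definition gsign :: "nat set \<Rightarrow> nat set \<Rightarrow> 'a::field" where
  "gsign S T = (-1) ^ card {(s,t). s \<in> S \<and> t \<in> T \<and> t < s}"

definition gmult :: "'a::field grass \<Rightarrow> 'a grass \<Rightarrow> 'a grass" where
  "gmult x y = (\<lambda>U. \<Sum>S\<in>Pow U. gsign S (U - S) * x S * y (U - S))"

definition gadd :: "'a::field grass \<Rightarrow> 'a grass \<Rightarrow> 'a grass" where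
  "gadd x y = (\<lambda>S. x S + y S)"

definition gscale :: "'a::field \<Rightarrow> 'a grass \<Rightarrow> 'a grass" where
  "gscale c x = (\<lambda>S. c * x S)"

definition ggen :: "nat \<Rightarrow> 'a::field grass" where
  "ggen i = (\<lambda>S. if S = {i} then 1 else 0)"

definition galg_hom :: "('a::field grass \<Rightarrow> 'a grass) \<Rightarrow> bool" where
  "galg_hom f \<longleftrightarrow> (\<forall>x\<in>gE. f x \<in> gE)
     \<and> (\<forall>x\<in>gE. \<forall>y\<in>gE. f (gadd x y) = gadd (f x) (f y))
     \<and> (\<forall>c. \<forall>x\<in>gE. f (gscale c x) = gscale c (f x))
     \<and> (\<forall>x\<in>gE. \<forall>y\<in>gE. f (gmult x y) = gmult (f x) (f y))"

text \<open>Homogeneous grading where the generators e_i with i \<in> D have degree 1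
  and the others degree 0: components of degree 0 and 1.\<close>
definition hcomp0 :: "nat set \<Rightarrow> 'a::field grass set" where
  "hcomp0 D = {x \<in> gE. \<forall>S. x S \<noteq> 0 \<longrightarrow> even (card (S \<inter> D))}"

definition hcomp1 :: "nat set \<Rightarrow> 'a::field grass set" where
  "hcomp1 D = {x \<in> gE. \<forall>S. x S \<noteq> 0 \<longrightarrow> odd (card (S \<inter> D))}"

definition z2_iso :: "'a::field grass set \<Rightarrow> 'a grass set \<Rightarrow> 'a grass set \<Rightarrow> 'a grass set \<Rightarrow> bool" where
  "z2_iso A0 A1 B0 B1 \<longleftrightarrow> (\<exists>\<psi>. galg_hom \<psi> \<and> bij_betw \<psi> gE gE \<and> \<psi> ` A0 = B0 \<and> \<psi> ` A1 = B1)"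

definition Ephi0 :: "('a::field grass \<Rightarrow> 'a grass) \<Rightarrow> 'a grass set" where
  "Ephi0 \<phi> = {x \<in> gE. \<phi> x = x}"

definition Ephi1 :: "('a::field grass \<Rightarrow> 'a grass) \<Rightarrow> 'a grass set" where
  "Ephi1 \<phi> = {x \<in> gE. \<phi> x = gscale (-1) x}"

text \<open>Homogeneous gradings (indices 0-based): E_k has e_i, i < k, of degree 0;
  E_{k*} has e_i, i < k, of degree 1; E_inf has e_i of degree 1 iff i odd.\<close>
definition Ek_deg1 :: "nat \<Rightarrow> nat set" where "Ek_deg1 k = {i. k \<le> i}"
definition Ekstar_deg1 :: "nat \<Rightarrow> nat set" where "Ekstar_deg1 k = {i. i < k}"
definition Einf_deg1 :: "nat set" where "Einf_deg1 = {i. odd i}"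

end

theory Submission
  imports Defs "HOL-Library.Countable_Set"
begin

definition supp :: "'a::field grass \<Rightarrow> nat set set" where "supp x = {S. x S \<noteq> 0}"
definition gone :: "'a::field grass" where "gone = (\<lambda>S. if S = {} then 1 else 0)"
definition gmono :: "nat set \<Rightarrow> 'a::field grass" where "gmono T = (\<lambda>S. if S = T then 1 else 0)"
definition ginv :: "nat set \<Rightarrow> nat set \<Rightarrow> (nat \<times> nat) set" where
  "ginv S T = {(s,t). s \<in> S \<and> t \<in> T \<and> t < s}"

lemma gsign_inv: "gsign S T = (-1) ^ card (ginv S T)"
  by (simp add: gsign_def ginv_def)

lemma inv_finite: "finite S \<Longrightarrow> finite T \<Longrightarrow> finite (ginv S T)"
  by (rule finite_subset[of _ "S \<times> T"]) (auto simp: ginv_def)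

lemma gsign_Un1: "finite A \<Longrightarrow> finite B \<Longrightarrow> finite C \<Longrightarrow> A \<inter> B = {} \<Longrightarrow>
   gsign (A \<union> B) C = (gsign A C * gsign B C :: 'a::field)"
proof -
  assume f: "finite A" "finite B" "finite C" and d: "A \<inter> B = {}"
  have "ginv (A \<union> B) C = ginv A C \<union> ginv B C" by (auto simp: ginv_def)
  moreover have "ginv A C \<inter> ginv B C = {}" using d by (auto simp: ginv_def)
  ultimately have "card (ginv (A \<union> B) C) = card (ginv A C) + card (ginv B C)"
    using f by (simp add: card_Un_disjoint inv_finite)
  thus ?thesis by (simp add: gsign_inv power_add)
qed

lemma gsign_Un2: "finite A \<Longrightarrow> finite B \<Longrightarrow> finite C \<Longrightarrow> B \<inter> C = {} \<Longrightarrow>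
   gsign A (B \<union> C) = (gsign A B * gsign A C :: 'a::field)"
proof -
  assume f: "finite A" "finite B" "finite C" and d: "B \<inter> C = {}"
  have "ginv A (B \<union> C) = ginv A B \<union> ginv A C" by (auto simp: ginv_def)
  moreover have "ginv A B \<inter> ginv A C = {}" using d by (auto simp: ginv_def)
  ultimately have "card (ginv A (B \<union> C)) = card (ginv A B) + card (ginv A C)"
    using f by (simp add: card_Un_disjoint inv_finite)
  thus ?thesis by (simp add: gsign_inv power_add)
qed

lemma gsign_swap: "finite A \<Longrightarrow> finite B \<Longrightarrow> A \<inter> B = {} \<Longrightarrow>
   gsign A B * gsign B A = ((-1) ^ (card A * card B) :: 'a::field)"
proof -
  assume f: "finite A" "finite B" and d: "A \<inter> B = {}"
  have "A \<times> B = ginv A B \<union> (\<lambda>(a,b). (b,a)) ` ginv B A"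
  proof (intro equalityI subsetI)
    fix p assume p: "p \<in> A \<times> B"
    then obtain a b where ab: "p = (a,b)" "a \<in> A" "b \<in> B" by blast
    with d have "a \<noteq> b" by blast
    then consider "b < a" | "a < b" by linarith
    then show "p \<in> ginv A B \<union> (\<lambda>(a,b). (b,a)) ` ginv B A"
    proof cases
      case 1 then show ?thesis using ab by (simp add: ginv_def)
    next
      case 2 then have "(b,a) \<in> ginv B A" using ab by (simp add: ginv_def)
      then have "(a,b) \<in> (\<lambda>(a,b). (b,a)) ` ginv B A" by force
      then show ?thesis using ab by simp
    qed
  next
    fix p assume "p \<in> ginv A B \<union> (\<lambda>(a,b). (b,a)) ` ginv B A"
    then show "p \<in> A \<times> B" unfolding ginv_def by auto
  qed
  moreover have "ginv A B \<inter> (\<lambda>(a,b). (b,a)) ` ginv B A = {}" by (auto simp: ginv_def)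
  moreover have "card ((\<lambda>(a,b). (b,a)) ` ginv B A) = card (ginv B A)"
    by (rule card_image) (auto simp: inj_on_def)
  ultimately have "card A * card B = card (ginv A B) + card (ginv B A)"
    using f by (metis card_Un_disjoint card_cartesian_product inv_finite finite_imageI)
  thus ?thesis by (simp add: gsign_inv power_add)
qed

lemma gsign_pm: "gsign A B = (1::'a::field) \<or> gsign A B = (-1::'a)"
proof -
  have "((-1::'a)^n = 1) \<or> (-1::'a)^n = -1" for n by (induct n) auto
  thus ?thesis by (simp add: gsign_def)
qed

lemma gsign_sq: "gsign A B * gsign A B = (1::'a::field)"
  unfolding gsign_def by (simp flip: power_mult_distrib)

lemma gsign_empty1[simp]: "gsign {} B = 1" by (simp add: gsign_def)
lemma gsign_empty2[simp]: "gsign A {} = 1" by (simp add: gsign_def)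

lemma gE_I: "finite (supp x) \<Longrightarrow> (\<And>S. x S \<noteq> 0 \<Longrightarrow> finite S) \<Longrightarrow> x \<in> gE"
  by (auto simp: gE_def supp_def)
lemma gE_supp: "x \<in> gE \<Longrightarrow> finite (supp x)"
  by (auto simp: gE_def supp_def)
lemma gE_fin: "x \<in> gE \<Longrightarrow> x S \<noteq> 0 \<Longrightarrow> finite S"
  by (auto simp: gE_def)
lemma gE_inf: "x \<in> gE \<Longrightarrow> infinite S \<Longrightarrow> x S = 0"
  using gE_fin by blast

lemma gmult_inf: "infinite U \<Longrightarrow> gmult x y U = 0"
  by (simp add: gmult_def)

lemma gmult_nz: assumes "gmult x y U \<noteq> 0"
  shows "finite U \<and> (\<exists>S\<subseteq>U. x S \<noteq> 0 \<and> y (U - S) \<noteq> 0)"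
proof -
  have fU: "finite U" using assms gmult_inf by blast
  from assms obtain S where "S \<in> Pow U" "gsign S (U - S) * x S * y (U - S) \<noteq> 0"
    unfolding gmult_def using sum.neutral by (metis (no_types, lifting))
  then show ?thesis using fU by auto
qed

lemma gmult_gE: assumes x: "x \<in> gE" and y: "y \<in> gE" shows "gmult x y \<in> gE"
proof (rule gE_I)
  have "supp (gmult x y) \<subseteq> (\<lambda>(S,T). S \<union> T) ` (supp x \<times> supp y)"
  proof
    fix U assume "U \<in> supp (gmult x y)"
    then obtain S where "S \<subseteq> U" "x S \<noteq> 0" "y (U - S) \<noteq> 0"
      using gmult_nz unfolding supp_def by blast
    then show "U \<in> (\<lambda>(S,T). S \<union> T) ` (supp x \<times> supp y)"
      unfolding supp_def by (intro image_eqI[of _ _ "(S, U - S)"]) auto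
  qed
  then show "finite (supp (gmult x y))"
    using gE_supp[OF x] gE_supp[OF y] by (meson finite_SigmaI finite_imageI finite_subset)
next
  fix S assume "gmult x y S \<noteq> 0" then show "finite S" using gmult_nz by blast
qed

lemma gadd_gE: "x \<in> gE \<Longrightarrow> y \<in> gE \<Longrightarrow> gadd x y \<in> gE"
proof (rule gE_I)
  assume x: "x \<in> gE" and y: "y \<in> gE"
  have "supp (gadd x y) \<subseteq> supp x \<union> supp y" by (auto simp: supp_def gadd_def)
  then show "finite (supp (gadd x y))" using gE_supp[OF x] gE_supp[OF y] by (meson finite_Un finite_subset)
  fix S assume "gadd x y S \<noteq> 0"
  then have "x S \<noteq> 0 \<or> y S \<noteq> 0" by (auto simp: gadd_def)
  then show "finite S" using x y gE_fin by blast
qed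

lemma gscale_gE: "x \<in> gE \<Longrightarrow> gscale c x \<in> gE"
proof (rule gE_I)
  assume x: "x \<in> gE"
  have "supp (gscale c x) \<subseteq> supp x" by (auto simp: supp_def gscale_def)
  then show "finite (supp (gscale c x))" using gE_supp[OF x] by (meson finite_subset)
  fix S assume "gscale c x S \<noteq> 0" then show "finite S"
    using x gE_fin by (fastforce simp: gscale_def)
qed

lemma gmono_gE: "finite T \<Longrightarrow> gmono T \<in> gE"
  by (rule gE_I) (auto simp: supp_def gmono_def split: if_splits)

lemma gone_gmono: "gone = gmono {}" by (simp add: gone_def gmono_def)
lemma ggen_gmono: "ggen i = gmono {i}" by (simp add: ggen_def gmono_def)
lemma gone_gE: "gone \<in> gE" by (simp add: gone_gmono gmono_gE)
lemma ggen_gE: "ggen i \<in> gE" by (simp add: ggen_gmono gmono_gE)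
lemma zero_gE: "(\<lambda>S. 0) \<in> gE" by (rule gE_I) (auto simp: supp_def)

lemma gmult_add_left: "gmult (gadd x y) z = gadd (gmult x z) (gmult y z)"
  by (simp add: gmult_def gadd_def fun_eq_iff algebra_simps sum.distrib)
lemma gmult_add_right: "gmult z (gadd x y) = gadd (gmult z x) (gmult z y)"
  by (simp add: gmult_def gadd_def fun_eq_iff algebra_simps sum.distrib)
lemma gmult_scale_left: "gmult (gscale c x) y = gscale c (gmult x y)"
  by (simp add: gmult_def gscale_def fun_eq_iff sum_distrib_left algebra_simps)
lemma gmult_scale_right: "gmult x (gscale c y) = gscale c (gmult x y)"
  by (simp add: gmult_def gscale_def fun_eq_iff sum_distrib_left algebra_simps)
lemma gmult_zero_left: "gmult (\<lambda>S. 0) y = (\<lambda>S. 0)"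
  by (simp add: gmult_def fun_eq_iff)
lemma gmult_zero_right: "gmult y (\<lambda>S. 0) = (\<lambda>S. 0)"
  by (simp add: gmult_def fun_eq_iff)

lemma gmono_mult: "finite S \<Longrightarrow> finite T \<Longrightarrow> gmult (gmono S) (gmono T) =
   (if S \<inter> T = {} then gscale (gsign S T) (gmono (S \<union> T)) else (\<lambda>U. 0))"
proof (rule ext)
  fix U assume fST: "finite S" "finite T"
  have "gmult (gmono S) (gmono T) U = (\<Sum>A\<in>Pow U. if A = S then (if U - S = T then gsign S T else 0) else 0)"
    unfolding gmult_def gmono_def by (rule sum.cong) auto
  also have "\<dots> = (if S \<subseteq> U \<and> U - S = T \<and> finite U then gsign S T else 0)"
    by (cases "finite U") (auto simp: sum.delta)
  also have "\<dots> = (if S \<inter> T = {} then gscale (gsign S T) (gmono (S \<union> T)) else (\<lambda>U. 0)) U"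
    using fST by (auto simp: gscale_def gmono_def gmult_def) 
  finally show "gmult (gmono S) (gmono T) U = (if S \<inter> T = {} then gscale (gsign S T) (gmono (S \<union> T)) else (\<lambda>U. 0)) U" .
qed

lemma gmult_one_right: assumes x: "x \<in> gE" shows "gmult x gone = x"
proof (rule ext)
  fix U show "gmult x gone U = x U"
  proof (cases "finite U")
    case False thus ?thesis using x by (simp add: gmult_inf gE_inf)
  next
    case True
    have "gmult x gone U = (\<Sum>A\<in>Pow U. if A = U then x U else 0)"
      unfolding gmult_def gone_def by (rule sum.cong) auto
    also have "\<dots> = x U" using True by (simp add: sum.delta)
    finally show ?thesis .
  qed
qed

lemma gmult_one_left: assumes x: "x \<in> gE" shows "gmult gone x = x"
proof (rule ext)
  fix U show "gmult gone x U = x U"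
  proof (cases "finite U")
    case False thus ?thesis using x by (simp add: gmult_inf gE_inf)
  next
    case True
    have "gmult gone x U = (\<Sum>A\<in>Pow U. if A = {} then x U else 0)"
      unfolding gmult_def gone_def by (rule sum.cong) auto
    also have "\<dots> = x U" using True by (simp add: sum.delta)
    finally show ?thesis .
  qed
qed

lemma gmult_assoc: "gmult (gmult x y) z = gmult x (gmult y z)"
proof (rule ext)
  fix U
  show "gmult (gmult x y) z U = gmult x (gmult y z) U"
  proof (cases "finite U")
    case False thus ?thesis by (simp add: gmult_inf)
  next
    case fU: True
    define f where "f = (\<lambda>A B. gsign A (U - A) * gsign B (A - B) * x B * y (A - B) * z (U - A))"
    define g where "g = (\<lambda>B C. gsign B (U - B) * gsign C (U - B - C) * x B * y C * z (U - B - C))"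
    have "gmult (gmult x y) z U = (\<Sum>A\<in>Pow U. \<Sum>B\<in>Pow A. f A B)"
      unfolding gmult_def f_def sum_distrib_left sum_distrib_right
      by (intro sum.cong refl) (simp add: mult_ac)
    also have "\<dots> = (\<Sum>(A,B)\<in>Sigma (Pow U) Pow. f A B)"
      using fU by (intro sum.Sigma) (auto intro: finite_subset)
    finally have L: "gmult (gmult x y) z U = (\<Sum>(A,B)\<in>Sigma (Pow U) Pow. f A B)" .
    have "gmult x (gmult y z) U = (\<Sum>B\<in>Pow U. \<Sum>C\<in>Pow (U - B). g B C)"
      unfolding gmult_def g_def sum_distrib_left sum_distrib_right
      by (intro sum.cong refl) (simp add: mult_ac Diff_Int2 Int_absorb1)
    also have "\<dots> = (\<Sum>(B,C)\<in>Sigma (Pow U) (\<lambda>B. Pow (U - B)). g B C)"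
      using fU by (intro sum.Sigma) auto
    finally have R: "gmult x (gmult y z) U = (\<Sum>(B,C)\<in>Sigma (Pow U) (\<lambda>B. Pow (U - B)). g B C)" .
    define h where "h = (\<lambda>(B::nat set,C::nat set). (B \<union> C, B))"
    have bij: "bij_betw h (Sigma (Pow U) (\<lambda>B. Pow (U - B))) (Sigma (Pow U) Pow)"
      by (rule bij_betw_byWitness[where f' = "\<lambda>(A,B). (B, A - B)"]) (auto simp: h_def)
    have "(\<Sum>(A,B)\<in>Sigma (Pow U) Pow. f A B) = (\<Sum>p\<in>Sigma (Pow U) (\<lambda>B. Pow (U - B)). (\<lambda>(A,B). f A B) (h p))"
      using sum.reindex_bij_betw[OF bij, of "\<lambda>(A,B). f A B"] by (simp only:)
    also have "\<dots> = (\<Sum>(B,C)\<in>Sigma (Pow U) (\<lambda>B. Pow (U - B)). g B C)"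
    proof (rule sum.cong[OF refl])
      fix p assume "p \<in> Sigma (Pow U) (\<lambda>B. Pow (U - B))"
      then obtain B C where p: "p = (B, C)" "B \<subseteq> U" "C \<subseteq> U - B" by auto
      define R where "R = U - B - C"
      have fin: "finite B" "finite C" "finite R" using p fU R_def by (auto intro: finite_subset)
      have e1: "B \<union> C - B = C" using p by auto
      have e2: "U - (B \<union> C) = R" using R_def by auto
      have e3: "U - B = C \<union> R" using p R_def by auto
      have s1: "gsign (B \<union> C) R = gsign B R * (gsign C R :: 'a)"
        using fin p R_def by (intro gsign_Un1) auto
      have s2: "gsign B (C \<union> R) = gsign B C * (gsign B R :: 'a)"
        using fin p R_def by (intro gsign_Un2) auto
      have e4: "U - B - C = R" by (simp add: R_def)
      show "(\<lambda>(A,B). f A B) (h p) = (\<lambda>(B,C). g B C) p"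
        unfolding p h_def f_def g_def case_prod_conv e4 unfolding e1 e2 e3 s1 s2 by (simp only: mult_ac)
    qed
    finally show ?thesis using L R by simp
  qed
qed

definition odd_el :: "'a::field grass \<Rightarrow> bool" where
  "odd_el a \<longleftrightarrow> (\<forall>S. a S \<noteq> 0 \<longrightarrow> odd (card S))"

lemma anticomm: assumes a: "odd_el a" and b: "odd_el b"
  shows "gmult a b = gscale (-1) (gmult b a)"
proof (rule ext)
  fix U
  show "gmult a b U = gscale (-1) (gmult b a) U"
  proof (cases "finite U")
    case False thus ?thesis by (simp add: gmult_inf gscale_def)
  next
    case fU: True
    have bij: "bij_betw (\<lambda>S. U - S) (Pow U) (Pow U)"
      by (rule bij_betw_byWitness[where f' = "\<lambda>S. U - S"]) auto
    have ri: "(\<Sum>S\<in>Pow U. F (U - S)) = (\<Sum>S\<in>Pow U. F S)" for F :: "nat set \<Rightarrow> 'a"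
      by (rule sum.reindex_bij_betw[OF bij])
    have "gmult b a U = (\<Sum>S\<in>Pow U. (\<lambda>T. gsign T (U - T) * b T * a (U - T)) (U - S))"
      unfolding gmult_def ri[of "\<lambda>T. gsign T (U - T) * b T * a (U - T)"] by simp
    also have "\<dots> = (\<Sum>S\<in>Pow U. gsign (U - S) S * b (U - S) * a S)"
    proof (rule sum.cong[OF refl])
      fix S assume "S \<in> Pow U"
      then have "U - (U - S) = S" by auto
      then show "(\<lambda>T. gsign T (U - T) * b T * a (U - T)) (U - S) = gsign (U - S) S * b (U - S) * a S"
        by simp
    qed
    finally have e: "gmult b a U = (\<Sum>S\<in>Pow U. gsign (U - S) S * b (U - S) * a S)" .
    have "gmult a b U = (\<Sum>S\<in>Pow U. - (gsign (U - S) S * b (U - S) * a S))"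
      unfolding gmult_def
    proof (rule sum.cong[OF refl])
      fix S assume S: "S \<in> Pow U"
      show "gsign S (U - S) * a S * b (U - S) = - (gsign (U - S) S * b (U - S) * a S)"
      proof (cases "a S = 0 \<or> b (U - S) = 0")
        case True thus ?thesis by auto
      next
        case False
        then have o: "odd (card S)" "odd (card (U - S))" using a b by (auto simp: odd_el_def)
        have fin: "finite S" "finite (U - S)" using S fU by (auto intro: finite_subset)
        have "gsign S (U - S) * gsign (U - S) S = ((-1) ^ (card S * card (U - S)) :: 'a)"
          using fin by (intro gsign_swap) auto
        also have "\<dots> = -1" using o by simp
        finally have h1: "gsign S (U - S) * gsign (U - S) S = (-1::'a)" .
        have "gsign S (U - S) = gsign S (U - S) * (gsign (U - S) S * (gsign (U - S) S :: 'a))"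
          by (simp only: gsign_sq mult_1_right)
        also have "\<dots> = (gsign S (U - S) * gsign (U - S) S) * gsign (U - S) S"
          by (simp only: mult.assoc)
        also have "\<dots> = - gsign (U - S) S" by (simp only: h1 mult_minus_left mult_1_left)
        finally have "gsign S (U - S) = - (gsign (U - S) S :: 'a)" .
        then show ?thesis by (simp add: mult_ac)
      qed
    qed
    also have "\<dots> = - gmult b a U" using e by (simp add: sum_negf)
    finally show ?thesis by (simp add: gscale_def)
  qed
qed

lemma neg_self_zero: "(z::'a::field_char_0) = - z \<Longrightarrow> z = 0"
proof -
  assume h: "z = - z"
  have "z + z = z + - z" using arg_cong[OF h, of "\<lambda>t. z + t"] by (simp only:)
  then have "z + z = 0" by (simp only: add.right_inverse)
  then have "2 * z = 0" by (simp only: mult_2)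
  then show "z = 0" by simp
qed

lemma sq_zero: assumes a: "odd_el (a :: 'a::field_char_0 grass)" shows "gmult a a = (\<lambda>S. 0)"
proof (rule ext)
  fix U
  have e1: "gmult a a U = gscale (-1) (gmult a a) U" using anticomm[OF a a] by (rule fun_cong)
  have e2: "gscale (-1) (gmult a a) U = - gmult a a U" by (simp add: gscale_def)
  from e1 e2 have "gmult a a U = - gmult a a U" by (rule trans)
  then show "gmult a a U = 0" by (rule neg_self_zero)
qed

lemma gscale_gscale: "gscale a (gscale b x) = gscale (a * b) x"
  by (simp add: gscale_def fun_eq_iff mult.assoc)
lemma gscale_one: "gscale 1 x = x" by (simp add: gscale_def)
lemma gscale_zero: "gscale c (\<lambda>S. 0) = (\<lambda>S. 0)" by (simp add: gscale_def)

primrec gprod :: "'a::field grass list \<Rightarrow> 'a grass" where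
  "gprod [] = gone"
| "gprod (a # l) = gmult a (gprod l)"

definition Gs :: "(nat \<Rightarrow> 'a::field grass) \<Rightarrow> nat set \<Rightarrow> 'a grass" where
  "Gs g S = gprod (map g (sorted_list_of_set S))"

lemma Gs_empty: "Gs g {} = gone" by (simp add: Gs_def)

lemma Gs_insert_min: assumes "finite W" "\<forall>a\<in>W. w < a"
  shows "Gs g (insert w W) = gmult (g w) (Gs g W)"
proof -
  have m: "Min (insert w W) = w" by (rule Min_eqI) (use assms in \<open>auto intro: less_imp_le\<close>)
  have r: "insert w W - {w} = W" using assms by auto
  show ?thesis unfolding Gs_def
    using sorted_list_of_set_nonempty[of "insert w W"] assms m r by simp
qed

lemma gprod_gE: "(\<forall>a\<in>set l. a \<in> gE) \<Longrightarrow> gprod l \<in> gE"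
  by (induct l) (auto simp: gone_gE gmult_gE)

lemma Gs_gE: "(\<And>i. g i \<in> gE) \<Longrightarrow> Gs g S \<in> gE"
  unfolding Gs_def by (rule gprod_gE) auto

lemma Gs_cong: "(\<And>i. i \<in> S \<Longrightarrow> g i = g' i) \<Longrightarrow> Gs g S = Gs g' S"
  unfolding Gs_def
  by (cases "finite S") (auto intro!: arg_cong[where f = gprod] map_cong)

lemma gsign_single_min: "\<forall>a\<in>W. s < a \<Longrightarrow> gsign {s} W = 1"
proof -
  assume "\<forall>a\<in>W. s < a"
  then have "ginv {s} W = {}" by (auto simp: ginv_def)
  then show ?thesis by (simp add: gsign_inv)
qed

lemma gsign_single_insert: assumes "finite W" "w < s" "w \<notin> W"
  shows "gsign {s} (insert w W) = - (gsign {s} W :: 'a::field)"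
proof -
  have "ginv {s} (insert w W) = insert (s,w) (ginv {s} W)" using assms by (auto simp: ginv_def)
  moreover have "(s,w) \<notin> ginv {s} W" using assms by (auto simp: ginv_def)
  moreover have "finite (ginv {s} W)" using assms by (simp add: inv_finite)
  ultimately show ?thesis by (simp add: gsign_inv)
qed

lemma Gs_ggen: "finite S \<Longrightarrow> Gs (ggen :: nat \<Rightarrow> 'a::field grass) S = gmono S"
proof (induction S rule: finite_linorder_min_induct)
  case empty then show ?case by (simp add: Gs_empty gone_gmono)
next
  case (insert w W)
  have "w \<notin> W" using insert by auto
  then have "gmult (ggen w) (gmono W) = gscale (gsign {w} W) (gmono (insert w W))"
    using gmono_mult[of "{w}" W] insert by (simp add: ggen_gmono)
  also have "\<dots> = gmono (insert w W)" using insert by (simp add: gscale_one gsign_single_min)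
  finally show ?case using Gs_insert_min[of W w "ggen :: nat \<Rightarrow> 'a grass"] insert by simp
qed

lemma gen_mult:
  fixes g :: "nat \<Rightarrow> 'a::field_char_0 grass"
  assumes gE: "\<And>i. g i \<in> gE" and od: "\<And>i. odd_el (g i)" and fin: "finite W"
  shows "gmult (g s) (Gs g W) = (if s \<in> W then (\<lambda>S. 0) else gscale (gsign {s} W) (Gs g (insert s W)))"
  using fin
proof (induction W rule: finite_linorder_min_induct)
  case empty
  have "Gs g {s} = gmult (g s) (Gs g {})" using Gs_insert_min[of "{}" s g] by simp
  then show ?case by (simp add: Gs_empty gmult_one_right gE gscale_one)
next
  case (insert w W)
  have wW: "w \<notin> W" using insert by auto
  have GW: "Gs g (insert w W) = gmult (g w) (Gs g W)" using Gs_insert_min insert by blast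
  consider "s < w" | "s = w" | "w < s" by linarith
  then show ?case
  proof cases
    case 1
    have sn: "s \<notin> insert w W" using 1 insert by auto
    have e1: "Gs g (insert s (insert w W)) = gmult (g s) (Gs g (insert w W))"
      using 1 insert by (intro Gs_insert_min) auto
    have e2: "gsign {s} (insert w W) = (1::'a)" using 1 insert by (intro gsign_single_min) auto
    show ?thesis using sn e1 e2 by (simp add: gscale_one)
  next
    case 2
    have "gmult (g s) (Gs g (insert w W)) = gmult (gmult (g w) (g w)) (Gs g W)"
      using GW 2 by (simp add: gmult_assoc)
    also have "\<dots> = (\<lambda>S. 0)" by (simp add: sq_zero od gmult_zero_left)
    finally show ?thesis using 2 by simp
  next
    case 3
    have ac: "gmult (g s) (g w) = gscale (-1) (gmult (g w) (g s))" by (rule anticomm[OF od od])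
    have "gmult (g s) (Gs g (insert w W)) = gmult (gmult (g s) (g w)) (Gs g W)"
      using GW by (simp add: gmult_assoc)
    also have "\<dots> = gscale (-1) (gmult (g w) (gmult (g s) (Gs g W)))"
      unfolding ac gmult_scale_left gmult_assoc ..
    finally have st: "gmult (g s) (Gs g (insert w W)) = gscale (-1) (gmult (g w) (gmult (g s) (Gs g W)))" .
    show ?thesis
    proof (cases "s \<in> W")
      case True
      then show ?thesis using st insert.IH by (simp add: gmult_zero_right gscale_zero)
    next
      case False
      have sn: "s \<notin> insert w W" using False 3 by auto
      have e1: "Gs g (insert w (insert s W)) = gmult (g w) (Gs g (insert s W))"
        using 3 insert by (intro Gs_insert_min) auto
      have e2: "gsign {s} (insert w W) = - (gsign {s} W :: 'a)"
        using 3 insert wW by (intro gsign_single_insert) auto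
      have e3: "insert w (insert s W) = insert s (insert w W)" by auto
      have "gmult (g s) (Gs g (insert w W)) =
          gscale (-1) (gmult (g w) (gscale (gsign {s} W) (Gs g (insert s W))))"
        using st insert.IH False by simp
      also have "\<dots> = gscale (- gsign {s} W) (Gs g (insert w (insert s W)))"
        unfolding e1 gmult_scale_right gscale_gscale by simp
      also have "\<dots> = gscale (gsign {s} (insert w W)) (Gs g (insert s (insert w W)))"
        unfolding e2 e3 ..
      finally show ?thesis using sn by simp
    qed
  qed
qed

lemma Gs_mult:
  fixes g :: "nat \<Rightarrow> 'a::field_char_0 grass"
  assumes gE: "\<And>i. g i \<in> gE" and od: "\<And>i. odd_el (g i)" and fS: "finite S" and fT: "finite T"
  shows "gmult (Gs g S) (Gs g T) = (if S \<inter> T = {} then gscale (gsign S T) (Gs g (S \<union> T)) else (\<lambda>U. 0))"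
  using fS
proof (induction S rule: finite_linorder_min_induct)
  case empty
  then show ?case by (simp add: Gs_empty gmult_one_left Gs_gE gE gscale_one)
next
  case (insert s S)
  have sS: "s \<notin> S" using insert by auto
  have GS: "Gs g (insert s S) = gmult (g s) (Gs g S)" using Gs_insert_min insert by blast
  have st: "gmult (Gs g (insert s S)) (Gs g T) = gmult (g s) (gmult (Gs g S) (Gs g T))"
    using GS by (simp add: gmult_assoc)
  show ?case
  proof (cases "S \<inter> T = {}")
    case False
    then show ?thesis using st insert.IH by (auto simp: gmult_zero_right)
  next
    case dj: True
    have st2: "gmult (Gs g (insert s S)) (Gs g T) = gscale (gsign S T) (gmult (g s) (Gs g (S \<union> T)))"
      using st insert.IH dj by (simp add: gmult_scale_right)
    show ?thesis
    proof (cases "s \<in> T")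
      case True
      then show ?thesis using st2 gen_mult[where g=g and W="S \<union> T" and s=s, OF gE od] insert fT
        by (auto simp: gscale_zero)
    next
      case False
      have fin: "finite S" "finite T" "finite {s}" using insert fT by auto
      have s1: "gsign {s} (S \<union> T) = gsign {s} S * (gsign {s} T :: 'a)"
        using fin dj by (intro gsign_Un2) auto
      have s2: "gsign {s} S = (1::'a)" using insert by (intro gsign_single_min) auto
      have s3: "gsign ({s} \<union> S) T = gsign {s} T * (gsign S T :: 'a)"
        using fin sS by (intro gsign_Un1) auto
      have e: "insert s (S \<union> T) = insert s S \<union> T" by auto
      have dj2: "insert s S \<inter> T = {}" using dj False by auto
      have "gmult (Gs g (insert s S)) (Gs g T) =
          gscale (gsign S T) (gscale (gsign {s} (S \<union> T)) (Gs g (insert s (S \<union> T))))"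
        using st2 gen_mult[where g=g and W="S \<union> T" and s=s, OF gE od] False sS fin by simp
      also have "\<dots> = gscale (gsign (insert s S) T) (Gs g (insert s S \<union> T))"
        using s1 s2 s3 e by (simp add: gscale_gscale mult.commute)
      finally show ?thesis using dj2 by simp
    qed
  qed
qed

definition lc :: "'b set \<Rightarrow> ('b \<Rightarrow> 'a) \<Rightarrow> ('b \<Rightarrow> 'a::field grass) \<Rightarrow> 'a grass" where
  "lc A c h = (\<lambda>U. \<Sum>a\<in>A. c a * h a U)"

definition subst :: "(nat \<Rightarrow> 'a::field grass) \<Rightarrow> 'a grass \<Rightarrow> 'a grass" where
  "subst g x = lc (supp x) x (Gs g)"

lemma lc_repr: assumes "x \<in> gE" shows "lc (supp x) x gmono = x"
proof (rule ext)
  fix U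
  have "lc (supp x) x gmono U = (\<Sum>S\<in>supp x. if U = S then x S else 0)"
    unfolding lc_def gmono_def by (rule sum.cong) auto
  also have "\<dots> = x U" using gE_supp[OF assms] by (simp add: supp_def)
  finally show "lc (supp x) x gmono U = x U" .
qed

lemma lc_super: assumes "finite B" "supp x \<subseteq> B" shows "lc (supp x) x h = lc B x h"
  unfolding lc_def
  by (rule ext, rule sum.mono_neutral_left) (use assms in \<open>auto simp: supp_def\<close>)

lemma lc_gE: assumes A: "finite A" and h: "\<And>a. a \<in> A \<Longrightarrow> h a \<in> gE" shows "lc A c h \<in> gE"
proof (rule gE_I)
  have "supp (lc A c h) \<subseteq> (\<Union>a\<in>A. supp (h a))"
  proof
    fix U assume "U \<in> supp (lc A c h)"
    then have "(\<Sum>a\<in>A. c a * h a U) \<noteq> 0" by (simp add: supp_def lc_def)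
    then obtain a where "a \<in> A" "c a * h a U \<noteq> 0" by (meson sum.neutral)
    then show "U \<in> (\<Union>a\<in>A. supp (h a))" by (auto simp: supp_def)
  qed
  moreover have "finite (\<Union>a\<in>A. supp (h a))" using A h gE_supp by blast
  ultimately show "finite (supp (lc A c h))" by (rule finite_subset)
next
  fix U assume "lc A c h U \<noteq> 0"
  then have "(\<Sum>a\<in>A. c a * h a U) \<noteq> 0" by (simp add: lc_def)
  then obtain a where "a \<in> A" "c a * h a U \<noteq> 0" by (meson sum.neutral)
  then show "finite U" using h gE_fin by fastforce
qed

lemma lc_mult: assumes "finite A" "finite B"
  shows "gmult (lc A c h) (lc B d k) = lc (A \<times> B) (\<lambda>p. c (fst p) * d (snd p)) (\<lambda>p. gmult (h (fst p)) (k (snd p)))"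
proof (rule ext)
  fix U
  have "lc (A \<times> B) (\<lambda>p. c (fst p) * d (snd p)) (\<lambda>p. gmult (h (fst p)) (k (snd p))) U
     = (\<Sum>a\<in>A. \<Sum>b\<in>B. c a * d b * (\<Sum>S\<in>Pow U. gsign S (U - S) * h a S * k b (U - S)))"
    unfolding lc_def gmult_def sum.cartesian_product' by simp
  also have "\<dots> = (\<Sum>a\<in>A. \<Sum>b\<in>B. \<Sum>S\<in>Pow U. c a * d b * (gsign S (U - S) * h a S * k b (U - S)))"
    by (simp only: sum_distrib_left)
  also have "\<dots> = (\<Sum>a\<in>A. \<Sum>S\<in>Pow U. \<Sum>b\<in>B. c a * d b * (gsign S (U - S) * h a S * k b (U - S)))"
    by (rule sum.cong[OF refl], rule sum.swap)
  also have "\<dots> = (\<Sum>S\<in>Pow U. \<Sum>a\<in>A. \<Sum>b\<in>B. c a * d b * (gsign S (U - S) * h a S * k b (U - S)))"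
    by (rule sum.swap)
  also have "\<dots> = gmult (lc A c h) (lc B d k) U"
    unfolding gmult_def lc_def
  proof (rule sum.cong[OF refl])
    fix S
    have "gsign S (U - S) * (\<Sum>a\<in>A. c a * h a S) * (\<Sum>b\<in>B. d b * k b (U - S))
       = gsign S (U - S) * (\<Sum>a\<in>A. \<Sum>b\<in>B. (c a * h a S) * (d b * k b (U - S)))"
      by (simp only: mult.assoc sum_product)
    also have "\<dots> = (\<Sum>a\<in>A. \<Sum>b\<in>B. gsign S (U - S) * ((c a * h a S) * (d b * k b (U - S))))"
      by (simp only: sum_distrib_left)
    also have "\<dots> = (\<Sum>a\<in>A. \<Sum>b\<in>B. c a * d b * (gsign S (U - S) * h a S * k b (U - S)))"
      by (simp only: mult_ac)
    finally show "(\<Sum>a\<in>A. \<Sum>b\<in>B. c a * d b * (gsign S (U - S) * h a S * k b (U - S))) =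
      gsign S (U - S) * (\<Sum>a\<in>A. c a * h a S) * (\<Sum>b\<in>B. d b * k b (U - S))" by simp
  qed
  finally show "gmult (lc A c h) (lc B d k) U = lc (A \<times> B) (\<lambda>p. c (fst p) * d (snd p)) (\<lambda>p. gmult (h (fst p)) (k (snd p))) U"
    by simp
qed

lemma subst_gE: "(\<And>i. g i \<in> gE) \<Longrightarrow> x \<in> gE \<Longrightarrow> subst g x \<in> gE"
  unfolding subst_def by (rule lc_gE) (auto simp: gE_supp Gs_gE)

lemma subst_add: assumes x: "x \<in> gE" and y: "y \<in> gE"
  shows "subst g (gadd x y) = gadd (subst g x) (subst g y)"
proof -
  define B where "B = supp x \<union> supp y"
  have fB: "finite B" using x y gE_supp B_def by auto
  have s: "supp (gadd x y) \<subseteq> B" by (auto simp: B_def supp_def gadd_def)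
  have "subst g (gadd x y) = lc B (gadd x y) (Gs g)" unfolding subst_def using fB s by (rule lc_super)
  also have "\<dots> = gadd (lc B x (Gs g)) (lc B y (Gs g))"
    by (simp add: lc_def gadd_def fun_eq_iff distrib_right sum.distrib)
  also have "\<dots> = gadd (subst g x) (subst g y)" unfolding subst_def
    using lc_super[OF fB, of x] lc_super[OF fB, of y] B_def by auto
  finally show ?thesis .
qed

lemma subst_scale: assumes x: "x \<in> gE"
  shows "subst g (gscale c x) = gscale c (subst g x)"
proof -
  have fB: "finite (supp x)" using x gE_supp by auto
  have s: "supp (gscale c x) \<subseteq> supp x" by (auto simp: supp_def gscale_def)
  have "subst g (gscale c x) = lc (supp x) (gscale c x) (Gs g)" unfolding subst_def using fB s by (rule lc_super)
  also have "\<dots> = gscale c (subst g x)"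
    by (simp add: subst_def lc_def gscale_def fun_eq_iff sum_distrib_left mult.assoc)
  finally show ?thesis .
qed

definition Kc :: "nat set \<Rightarrow> nat set \<Rightarrow> 'a::field" where
  "Kc S T = (if S \<inter> T = {} then gsign S T else 0)"

lemma gmono_mult': "finite S \<Longrightarrow> finite T \<Longrightarrow> gmult (gmono S) (gmono T) = (\<lambda>U. Kc S T * gmono (S \<union> T) U)"
  by (simp add: gmono_mult Kc_def gscale_def fun_eq_iff)

lemma Gs_mult':
  fixes g :: "nat \<Rightarrow> 'a::field_char_0 grass"
  assumes "\<And>i. g i \<in> gE" "\<And>i. odd_el (g i)" "finite S" "finite T"
  shows "gmult (Gs g S) (Gs g T) = (\<lambda>U. Kc S T * Gs g (S \<union> T) U)"
  using Gs_mult[OF assms] by (simp add: Kc_def gscale_def fun_eq_iff)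

lemma subst_mult:
  fixes g :: "nat \<Rightarrow> 'a::field_char_0 grass"
  assumes gE: "\<And>i. g i \<in> gE" and od: "\<And>i. odd_el (g i)" and x: "x \<in> gE" and y: "y \<in> gE"
  shows "subst g (gmult x y) = gmult (subst g x) (subst g y)"
proof (rule ext)
  fix U
  define P where "P = supp x \<times> supp y"
  define cp where "cp = (\<lambda>p. x (fst p) * y (snd p))"
  define Kp where "Kp = (\<lambda>p. Kc (fst p) (snd p) :: 'a)"
  define Up where "Up = (\<lambda>p::nat set \<times> nat set. fst p \<union> snd p)"
  have fP: "finite P" using gE_supp[OF x] gE_supp[OF y] P_def by auto
  have finp: "finite (fst p)" "finite (snd p)" if "p \<in> P" for p
    using that x y gE_fin by (auto simp: P_def supp_def)
  have xy0: "gmult x y = gmult (lc (supp x) x gmono) (lc (supp y) y gmono)"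
    by (simp only: lc_repr[OF x] lc_repr[OF y])
  have xy: "gmult x y = lc P cp (\<lambda>p. gmult (gmono (fst p)) (gmono (snd p)))"
    unfolding xy0 P_def cp_def using gE_supp[OF x] gE_supp[OF y] by (rule lc_mult)
  have xyW: "gmult x y W = (\<Sum>p\<in>P. cp p * (Kp p * gmono (Up p) W))" for W
    unfolding xy lc_def Kp_def Up_def by (rule sum.cong[OF refl]) (simp add: gmono_mult' finp)
  define M where "M = Up ` P"
  have fM: "finite M" using fP M_def by auto
  have sM: "supp (gmult x y) \<subseteq> M"
  proof
    fix W assume "W \<in> supp (gmult x y)"
    then have "gmult x y W \<noteq> 0" by (simp add: supp_def)
    then obtain S where "S \<subseteq> W" "x S \<noteq> 0" "y (W - S) \<noteq> 0" using gmult_nz[of x y W] by blast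
    then have "(S, W - S) \<in> P" "W = Up (S, W - S)" by (auto simp: P_def supp_def Up_def)
    then show "W \<in> M" unfolding M_def by blast
  qed
  have "subst g (gmult x y) U = lc M (gmult x y) (Gs g) U"
    unfolding subst_def using lc_super[OF fM sM] by simp
  also have "\<dots> = (\<Sum>W\<in>M. \<Sum>p\<in>P. cp p * Kp p * (gmono (Up p) W * Gs g W U))"
    unfolding lc_def xyW sum_distrib_right by (simp only: mult_ac)
  also have "\<dots> = (\<Sum>p\<in>P. \<Sum>W\<in>M. cp p * Kp p * (gmono (Up p) W * Gs g W U))"
    by (rule sum.swap)
  also have "\<dots> = (\<Sum>p\<in>P. cp p * Kp p * (\<Sum>W\<in>M. if W = Up p then Gs g (Up p) U else 0))"
  proof (rule sum.cong[OF refl])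
    fix p
    have e: "gmono (Up p) W * Gs g W U = (if W = Up p then Gs g (Up p) U else 0)" for W
      by (simp add: gmono_def)
    show "(\<Sum>W\<in>M. cp p * Kp p * (gmono (Up p) W * Gs g W U)) =
      cp p * Kp p * (\<Sum>W\<in>M. if W = Up p then Gs g (Up p) U else 0)"
      unfolding e by (simp only: sum_distrib_left)
  qed
  also have "\<dots> = (\<Sum>p\<in>P. cp p * (Kp p * Gs g (Up p) U))"
  proof (rule sum.cong[OF refl])
    fix p assume "p \<in> P"
    then have "Up p \<in> M" by (simp add: M_def)
    then show "cp p * Kp p * (\<Sum>W\<in>M. if W = Up p then Gs g (Up p) U else 0) = cp p * (Kp p * Gs g (Up p) U)"
      using fM by (simp add: mult.assoc)
  qed
  also have "\<dots> = lc P cp (\<lambda>p. gmult (Gs g (fst p)) (Gs g (snd p))) U"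
    unfolding lc_def Kp_def Up_def by (rule sum.cong[OF refl]) (simp add: Gs_mult'[OF gE od] finp)
  also have "\<dots> = gmult (subst g x) (subst g y) U"
    unfolding subst_def P_def cp_def using lc_mult[OF gE_supp[OF x] gE_supp[OF y], of x "Gs g" y "Gs g"] by simp
  finally show "subst g (gmult x y) U = gmult (subst g x) (subst g y) U" .
qed

lemma subst_hom:
  fixes g :: "nat \<Rightarrow> 'a::field_char_0 grass"
  assumes gE: "\<And>i. g i \<in> gE" and od: "\<And>i. odd_el (g i)"
  shows "galg_hom (subst g)"
  unfolding galg_hom_def
proof (intro conjI ballI allI)
  fix x y :: "'a grass" and c :: 'a assume x: "x \<in> gE" and y: "y \<in> gE"
  show "subst g x \<in> gE" by (rule subst_gE[OF gE x])
  show "subst g (gadd x y) = gadd (subst g x) (subst g y)" by (rule subst_add[OF x y])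
  show "subst g (gmult x y) = gmult (subst g x) (subst g y)" by (rule subst_mult[OF gE od x y])
next
  fix x :: "'a grass" and c :: 'a assume x: "x \<in> gE"
  show "subst g (gscale c x) = gscale c (subst g x)" by (rule subst_scale[OF x])
qed

lemma subst_one: "subst g gone = gone"
proof -
  have "supp (gone :: 'a grass) = {{}}" by (auto simp: supp_def gone_def)
  then show ?thesis by (simp add: subst_def lc_def Gs_empty gone_def fun_eq_iff)
qed

lemma subst_gen: "subst g (ggen i) = gmult (g i) gone"
proof -
  have "supp (ggen i :: 'a grass) = {{i}}" by (auto simp: supp_def ggen_def)
  moreover have "Gs g {i} = gmult (g i) gone" using Gs_insert_min[of "{}" i g] by (simp add: Gs_empty)
  ultimately show ?thesis by (simp add: subst_def lc_def ggen_def fun_eq_iff)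
qed

lemma lc_empty: "lc {} c h = (\<lambda>U. 0)" by (simp add: lc_def)

lemma lc_insert: "finite A \<Longrightarrow> a \<notin> A \<Longrightarrow> lc (insert a A) c h = gadd (gscale (c a) (h a)) (lc A c h)"
  by (simp add: lc_def gadd_def gscale_def fun_eq_iff)

lemma hom_gE: "galg_hom f \<Longrightarrow> x \<in> gE \<Longrightarrow> f x \<in> gE" by (simp add: galg_hom_def)
lemma hom_add: "galg_hom f \<Longrightarrow> x \<in> gE \<Longrightarrow> y \<in> gE \<Longrightarrow> f (gadd x y) = gadd (f x) (f y)"
  by (simp add: galg_hom_def)
lemma hom_scale: "galg_hom f \<Longrightarrow> x \<in> gE \<Longrightarrow> f (gscale c x) = gscale c (f x)"
  by (simp add: galg_hom_def)
lemma hom_mult: "galg_hom f \<Longrightarrow> x \<in> gE \<Longrightarrow> y \<in> gE \<Longrightarrow> f (gmult x y) = gmult (f x) (f y)"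
  by (simp add: galg_hom_def)

lemma hom_zero: assumes f: "galg_hom f" shows "f (\<lambda>U. 0) = (\<lambda>U. 0)"
proof -
  have "(\<lambda>U. 0) = gscale 0 (gone :: 'a grass)" by (simp add: gscale_def)
  then have "f (\<lambda>U. 0) = gscale 0 (f gone)" using hom_scale[OF f gone_gE] by simp
  then show ?thesis by (simp add: gscale_def)
qed

lemma hom_lc: assumes f: "galg_hom f" and A: "finite A" and h: "\<And>a. a \<in> A \<Longrightarrow> h a \<in> gE"
  shows "f (lc A c h) = lc A c (\<lambda>a. f (h a))"
  using A h
proof (induction A rule: finite_induct)
  case empty then show ?case by (simp add: lc_empty hom_zero[OF f])
next
  case (insert a A)
  have g1: "gscale (c a) (h a) \<in> gE" using insert by (simp add: gscale_gE)
  have g2: "lc A c h \<in> gE" using insert by (intro lc_gE) auto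
  have "f (lc (insert a A) c h) = gadd (f (gscale (c a) (h a))) (f (lc A c h))"
    using insert f g1 g2 by (simp add: lc_insert galg_hom_def)
  also have "\<dots> = gadd (gscale (c a) (f (h a))) (lc A c (\<lambda>a. f (h a)))"
    using insert f by (simp add: galg_hom_def)
  also have "\<dots> = lc (insert a A) c (\<lambda>a. f (h a))" using insert by (simp add: lc_insert)
  finally show ?case .
qed

lemma hom_Gs: assumes f: "galg_hom f" and f1: "f gone = gone" and S: "finite S"
  shows "f (Gs ggen S) = Gs (\<lambda>i. f (ggen i)) S"
  using S
proof (induction S rule: finite_linorder_min_induct)
  case empty then show ?case by (simp add: Gs_empty f1)
next
  case (insert w W)
  have "f (Gs ggen (insert w W)) = f (gmult (ggen w) (Gs ggen W))"
    using insert by (simp add: Gs_insert_min)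
  also have "\<dots> = gmult (f (ggen w)) (f (Gs ggen W))"
    by (rule hom_mult[OF f ggen_gE Gs_gE[OF ggen_gE]])
  also have "\<dots> = Gs (\<lambda>i. f (ggen i)) (insert w W)" using insert by (simp add: Gs_insert_min)
  finally show ?case .
qed

lemma hom_eq_subst: assumes f: "galg_hom f" and f1: "f gone = gone" and x: "x \<in> gE"
  shows "f x = subst (\<lambda>i. f (ggen i)) x"
proof -
  have fin: "finite (supp x)" using gE_supp[OF x] .
  have fS: "\<And>S. S \<in> supp x \<Longrightarrow> finite S" using x gE_fin by (auto simp: supp_def)
  have gg: "Gs ggen S = (gmono S :: 'a grass)" if "S \<in> supp x" for S using Gs_ggen fS[OF that] by blast
  have "x = lc (supp x) x gmono" using lc_repr[OF x] by simp
  also have "\<dots> = lc (supp x) x (Gs ggen)"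
    unfolding lc_def by (intro ext sum.cong refl) (simp add: gg)
  finally have xr: "x = lc (supp x) x (Gs ggen)" .
  have "f x = lc (supp x) x (\<lambda>S. f (Gs ggen S))"
    by (subst xr, rule hom_lc[OF f fin]) (simp add: Gs_gE ggen_gE)
  also have "\<dots> = lc (supp x) x (Gs (\<lambda>i. f (ggen i)))"
    unfolding lc_def using fS hom_Gs[OF f f1] by (intro ext sum.cong) auto
  finally show ?thesis by (simp add: subst_def)
qed

lemma subst_ggen_id: assumes x: "x \<in> gE" shows "subst ggen x = x"
proof -
  have fS: "\<And>S. S \<in> supp x \<Longrightarrow> finite S" using x gE_fin by (auto simp: supp_def)
  have gg: "Gs ggen S = (gmono S :: 'a grass)" if "S \<in> supp x" for S using Gs_ggen fS[OF that] by blast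
  have "subst ggen x = lc (supp x) x gmono"
    unfolding subst_def lc_def by (intro ext sum.cong refl) (simp add: gg)
  then show ?thesis using lc_repr[OF x] by simp
qed

lemma hom_comp: "galg_hom f \<Longrightarrow> galg_hom h \<Longrightarrow> galg_hom (\<lambda>x. f (h x))"
  unfolding galg_hom_def by auto

lemma hom_inverse: assumes f: "galg_hom f" and h: "galg_hom h" and f1: "f gone = gone" and h1: "h gone = gone"
  and fh: "\<And>i. f (h (ggen i)) = ggen i" and x: "x \<in> gE"
  shows "f (h x) = x"
proof -
  have "f (h x) = subst (\<lambda>i. f (h (ggen i))) x"
    using hom_eq_subst[OF hom_comp[OF f h], of x] f1 h1 x by simp
  also have "\<dots> = x" using fh subst_ggen_id[OF x] by simp
  finally show ?thesis .
qed

lemma hom_agree: assumes f: "galg_hom f" and h: "galg_hom h" and f1: "f gone = gone" and h1: "h gone = gone"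
  and fh: "\<And>i. f (ggen i) = h (ggen i)" and x: "x \<in> gE"
  shows "f x = h x"
  using hom_eq_subst[OF f f1 x] hom_eq_subst[OF h h1 x] fh by simp

lemma odd_ggen: "odd_el (ggen i)" by (simp add: odd_el_def ggen_def)
lemma odd_scale: "odd_el a \<Longrightarrow> odd_el (gscale c a)" by (simp add: odd_el_def gscale_def)
lemma odd_add: "odd_el a \<Longrightarrow> odd_el b \<Longrightarrow> odd_el (gadd a b)"
  unfolding odd_el_def gadd_def by (metis add.left_neutral add.right_neutral)

definition tg :: "nat set \<Rightarrow> nat \<Rightarrow> 'a::field grass" where
  "tg D i = gscale (if i \<in> D then -1 else 1) (ggen i)"

definition theta :: "nat set \<Rightarrow> 'a::field grass \<Rightarrow> 'a grass" where
  "theta D = subst (tg D)"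

lemma tg_gE: "tg D i \<in> gE" by (simp add: tg_def gscale_gE ggen_gE)
lemma tg_odd: "odd_el (tg D i)" by (simp add: tg_def odd_scale odd_ggen)

lemma theta_hom: "galg_hom (theta D :: 'a::field_char_0 grass \<Rightarrow> _)"
  unfolding theta_def by (rule subst_hom[OF tg_gE tg_odd])

lemma theta_one: "theta D gone = gone" by (simp add: theta_def subst_one)

lemma theta_gen: "theta D (ggen i) = tg D i"
  by (simp add: theta_def subst_gen gmult_one_right tg_gE)

lemma Gs_tg: "finite S \<Longrightarrow> Gs (tg D) S = gscale ((-1) ^ card (S \<inter> D)) (gmono S :: 'a::field grass)"
proof (induction S rule: finite_linorder_min_induct)
  case empty then show ?case by (simp add: Gs_empty gone_gmono gscale_one)
next
  case (insert w W)
  have wW: "w \<notin> W" using insert by auto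
  have gm: "gmult (ggen w) (gmono W) = (gmono (insert w W) :: 'a grass)"
  proof -
    have g1: "Gs (ggen :: nat \<Rightarrow> 'a grass) W = gmono W" using insert by (simp add: Gs_ggen)
    have g2: "Gs (ggen :: nat \<Rightarrow> 'a grass) (insert w W) = gmono (insert w W)" using insert by (simp add: Gs_ggen)
    have g3: "Gs (ggen :: nat \<Rightarrow> 'a grass) (insert w W) = gmult (ggen w) (Gs ggen W)"
      using insert by (simp add: Gs_insert_min)
    show ?thesis using g1 g2 g3 by simp
  qed
  have c: "card (insert w W \<inter> D) = (if w \<in> D then Suc (card (W \<inter> D)) else card (W \<inter> D))"
    using wW insert by (cases "w \<in> D") (auto simp: Int_insert_left)
  have "Gs (tg D) (insert w W) = gmult (tg D w) (Gs (tg D) W)"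
    using insert by (simp add: Gs_insert_min)
  also have "\<dots> = gmult (tg D w) (gscale ((-1) ^ card (W \<inter> D)) (gmono W :: 'a grass))"
    using insert.IH by (simp only:)
  also have "\<dots> = gscale (if w \<in> D then -1 else 1) (gscale ((-1) ^ card (W \<inter> D)) (gmult (ggen w) (gmono W)))"
    by (simp only: tg_def gmult_scale_left gmult_scale_right gscale_gscale mult.commute)
  also have "\<dots> = gscale ((-1) ^ card (insert w W \<inter> D)) (gmono (insert w W))"
    unfolding gm gscale_gscale c by simp
  finally show ?case .
qed

lemma theta_formula: assumes x: "x \<in> gE"
  shows "theta D x U = (-1) ^ card (U \<inter> D) * (x U :: 'a::field)"
proof -
  have fS: "\<And>S. S \<in> supp x \<Longrightarrow> finite S" using x gE_fin by (auto simp: supp_def)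
  have "theta D x U = (\<Sum>S\<in>supp x. if U = S then (-1) ^ card (U \<inter> D) * x U else 0)"
    unfolding theta_def subst_def lc_def
  proof (rule sum.cong[OF refl])
    fix S assume "S \<in> supp x"
    then have "Gs (tg D) S = gscale ((-1) ^ card (S \<inter> D)) (gmono S :: 'a grass)" using fS Gs_tg by blast
    then show "x S * Gs (tg D) S U = (if U = S then (-1) ^ card (U \<inter> D) * x U else 0)"
      by (simp add: gscale_def gmono_def)
  qed
  also have "\<dots> = (-1) ^ card (U \<inter> D) * x U"
    using gE_supp[OF x] by (simp add: supp_def)
  finally show ?thesis .
qed

lemma pow_m1: "((-1::'a::field_char_0) ^ n = 1) \<longleftrightarrow> even n"
  by (simp add: minus_one_power_iff)

lemma eigen0: assumes x: "x \<in> gE"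
  shows "theta D x = x \<longleftrightarrow> x \<in> (hcomp0 D :: 'a::field_char_0 grass set)"
proof
  assume t: "theta D x = x"
  show "x \<in> hcomp0 D" unfolding hcomp0_def
  proof (intro CollectI conjI allI impI x)
    fix S assume nz: "x S \<noteq> 0"
    have "(-1) ^ card (S \<inter> D) * x S = x S" using theta_formula[OF x, of D S] t by simp
    then have "(-1) ^ card (S \<inter> D) = (1::'a)" using nz by simp
    then show "even (card (S \<inter> D))" by (simp add: pow_m1)
  qed
next
  assume h: "x \<in> hcomp0 D"
  show "theta D x = x"
  proof (rule ext)
    fix U show "theta D x U = x U"
      using h theta_formula[OF x, of D U] by (cases "x U = 0") (auto simp: hcomp0_def)
  qed
qed

lemma eigen1: assumes x: "x \<in> gE"
  shows "theta D x = gscale (-1) x \<longleftrightarrow> x \<in> (hcomp1 D :: 'a::field_char_0 grass set)"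
proof
  assume t: "theta D x = gscale (-1) x"
  show "x \<in> hcomp1 D" unfolding hcomp1_def
  proof (intro CollectI conjI allI impI x)
    fix S assume nz: "x S \<noteq> 0"
    have "(-1) ^ card (S \<inter> D) * x S = - x S" using theta_formula[OF x, of D S] t
      by (simp add: gscale_def fun_eq_iff)
    then have "(-1) ^ card (S \<inter> D) = (-1::'a)" using nz by (metis mult_minus_left mult_cancel_right mult_1)
    then show "odd (card (S \<inter> D))" by (simp add: minus_one_power_iff split: if_splits)
  qed
next
  assume h: "x \<in> hcomp1 D"
  show "theta D x = gscale (-1) x"
  proof (rule ext)
    fix U show "theta D x U = gscale (-1) x U"
      using h theta_formula[OF x, of D U] by (cases "x U = 0") (auto simp: hcomp1_def gscale_def)
  qed
qed

lemma z2_conj: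
  fixes Psi :: "'a::field_char_0 grass \<Rightarrow> 'a grass"
  assumes Psi: "galg_hom Psi" and Psi': "\<And>y. y \<in> gE \<Longrightarrow> Psi' y \<in> gE"
    and inv1: "\<And>y. y \<in> gE \<Longrightarrow> Psi (Psi' y) = y" and inv2: "\<And>x. x \<in> gE \<Longrightarrow> Psi' (Psi x) = x"
    and phi: "\<And>x. x \<in> gE \<Longrightarrow> phi x \<in> gE"
    and conj: "\<And>x. x \<in> gE \<Longrightarrow> Psi (phi x) = theta D (Psi x)"
  shows "z2_iso (Ephi0 phi) (Ephi1 phi) (hcomp0 D) (hcomp1 D)"
  unfolding z2_iso_def
proof (intro exI conjI)
  show "galg_hom Psi" by (rule Psi)
  show "bij_betw Psi gE gE"
    by (rule bij_betw_byWitness[where f' = Psi']) (use inv1 inv2 Psi' hom_gE[OF Psi] in auto)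
  show "Psi ` Ephi0 phi = hcomp0 D"
  proof (intro equalityI subsetI)
    fix y :: "'a grass" assume "y \<in> Psi ` Ephi0 phi"
    then obtain x where x: "x \<in> gE" "phi x = x" "y = Psi x" by (auto simp: Ephi0_def)
    have "theta D (Psi x) = Psi x" using conj[OF x(1)] x(2) by simp
    then show "y \<in> hcomp0 D" using eigen0[OF hom_gE[OF Psi x(1)]] x(3) by simp
  next
    fix y :: "'a grass" assume y: "y \<in> hcomp0 D"
    then have yE: "y \<in> gE" by (simp add: hcomp0_def)
    define x where "x = Psi' y"
    have xE: "x \<in> gE" using Psi' yE x_def by simp
    have Px: "Psi x = y" using inv1 yE x_def by simp
    have "Psi (phi x) = Psi x" using conj[OF xE] Px eigen0[OF yE] y by simp
    then have "phi x = x" using inv2[OF phi[OF xE]] inv2[OF xE] by metis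
    then show "y \<in> Psi ` Ephi0 phi" using xE Px by (auto simp: Ephi0_def)
  qed
  show "Psi ` Ephi1 phi = hcomp1 D"
  proof (intro equalityI subsetI)
    fix y :: "'a grass" assume "y \<in> Psi ` Ephi1 phi"
    then obtain x where x: "x \<in> gE" "phi x = gscale (-1) x" "y = Psi x" by (auto simp: Ephi1_def)
    have "theta D (Psi x) = gscale (-1) (Psi x)" using conj[OF x(1)] x(2) hom_scale[OF Psi x(1)] by simp
    then show "y \<in> hcomp1 D" using eigen1[OF hom_gE[OF Psi x(1)]] x(3) by simp
  next
    fix y :: "'a grass" assume y: "y \<in> hcomp1 D"
    then have yE: "y \<in> gE" by (simp add: hcomp1_def)
    define x where "x = Psi' y"
    have xE: "x \<in> gE" using Psi' yE x_def by simp
    have Px: "Psi x = y" using inv1 yE x_def by simp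
    have "Psi (phi x) = gscale (-1) y" using conj[OF xE] Px eigen1[OF yE] y by simp
    also have "\<dots> = Psi (gscale (-1) x)" using hom_scale[OF Psi xE] Px by simp
    finally have "Psi (phi x) = Psi (gscale (-1) x)" .
    then have "phi x = gscale (-1) x" using inv2[OF phi[OF xE]] inv2[OF gscale_gE[OF xE]] by metis
    then show "y \<in> Psi ` Ephi1 phi" using xE Px by (auto simp: Ephi1_def)
  qed
qed

lemma inf_bij: fixes A B :: "nat set" assumes "infinite A" "infinite B" shows "\<exists>f. bij_betw f A B"
proof -
  have a: "bij_betw (from_nat_into A) UNIV A" using assms by (intro bij_betw_from_nat_into) auto
  have b: "bij_betw (from_nat_into B) UNIV B" using assms by (intro bij_betw_from_nat_into) auto
  have "bij_betw (from_nat_into B \<circ> inv_into UNIV (from_nat_into A)) A B"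
    by (rule bij_betw_trans[OF bij_betw_inv_into[OF a] b])
  then show ?thesis by blast
qed

lemma perm_exists: fixes A B :: "nat set"
  assumes f: "bij_betw f A B" and h: "bij_betw h (- A) (- B)"
  shows "\<exists>p. bij p \<and> p ` A = B"
proof -
  define p where "p = (\<lambda>x. if x \<in> A then f x else h x)"
  have 1: "bij_betw p A B" using f unfolding p_def by (rule bij_betw_cong[THEN iffD1, rotated]) auto
  have 2: "bij_betw p (- A) (- B)" using h unfolding p_def by (rule bij_betw_cong[THEN iffD1, rotated]) auto
  have "bij_betw p (A \<union> - A) (B \<union> - B)" by (rule bij_betw_combine[OF 1 2]) auto
  then have "bij p" by simp
  moreover have "p ` A = B" using 1 by (simp add: bij_betw_def)
  ultimately show ?thesis by blast
qed

lemma perm_choice: fixes D :: "nat set"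
  shows "(\<exists>p. bij p \<and> p ` D = Einf_deg1) \<or> (\<exists>k p. bij p \<and> p ` D = Ekstar_deg1 k)
        \<or> (\<exists>k p. bij p \<and> p ` D = Ek_deg1 k)"
proof -
  have infU: "infinite (UNIV :: nat set)" by simp
  have inf_ge: "infinite {i::nat. k \<le> i}" for k
    unfolding infinite_nat_iff_unbounded
  proof (intro allI)
    fix m show "\<exists>n>m. n \<in> {i. k \<le> i}" by (rule exI[of _ "m + k + 1"]) auto
  qed
  have cl: "- {i::nat. i < k} = {i. k \<le> i}" for k by auto
  have cg: "- {i::nat. k \<le> i} = {i. i < k}" for k by auto
  have lt: "{i::nat. i < k} = {..<k}" for k by auto
  have flt: "finite {i::nat. i < k}" for k unfolding lt by simp
  have clt: "card {i::nat. i < k} = k" for k unfolding lt by simp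
  show ?thesis
  proof (cases "finite D")
    case True
    define k where "k = card D"
    have "infinite (- D)"
    proof
      assume "finite (- D)"
      then have "finite (D \<union> - D)" using True by simp
      then show False using infU by simp
    qed
    then obtain h where h: "bij_betw h (- D) {i. k \<le> i}" using inf_bij inf_ge by blast
    then have h': "bij_betw h (- D) (- {i. i < k})" by (simp only: cl)
    have "card D = card {i::nat. i < k}" using k_def clt[of k] by simp
    then obtain f where f: "bij_betw f D {i. i < k}"
      using finite_same_card_bij[OF True flt[of k]] by blast
    obtain p where "bij p" "p ` D = {i. i < k}" using perm_exists[OF f h'] by blast
    then have "\<exists>k p. bij p \<and> p ` D = Ekstar_deg1 k"
      by (intro exI[of _ k] exI[of _ p]) (simp add: Ekstar_deg1_def)
    then show ?thesis by (intro disjI2 disjI1)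
  next
    case infD: False
    show ?thesis
    proof (cases "finite (- D)")
      case True
      define k where "k = card (- D)"
      have "card (- D) = card {i::nat. i < k}" using k_def clt[of k] by simp
      then obtain h where h: "bij_betw h (- D) {i. i < k}"
        using finite_same_card_bij[OF True flt[of k]] by blast
      then have h': "bij_betw h (- D) (- {i. k \<le> i})" by (simp only: cg)
      obtain f where f: "bij_betw f D {i. k \<le> i}" using inf_bij[OF infD inf_ge] by blast
      obtain p where "bij p" "p ` D = {i. k \<le> i}" using perm_exists[OF f h'] by blast
      then have "\<exists>k p. bij p \<and> p ` D = Ek_deg1 k"
        by (intro exI[of _ k] exI[of _ p]) (simp add: Ek_deg1_def)
      then show ?thesis by (intro disjI2)
    next
      case False
      have io: "infinite {i::nat. odd i}"
        unfolding infinite_nat_iff_unbounded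
      proof (intro allI)
        fix m show "\<exists>n>m. n \<in> {i::nat. odd i}" by (rule exI[of _ "2 * m + 1"]) auto
      qed
      have ie: "infinite (- {i::nat. odd i})"
        unfolding infinite_nat_iff_unbounded
      proof (intro allI)
        fix m show "\<exists>n>m. n \<in> - {i::nat. odd i}" by (rule exI[of _ "2 * m + 2"]) auto
      qed
      obtain f where f: "bij_betw f D {i::nat. odd i}" using inf_bij[OF infD io] by blast
      obtain h where h: "bij_betw h (- D) (- {i::nat. odd i})" using inf_bij[OF False ie] by blast
      obtain p where "bij p" "p ` D = {i::nat. odd i}" using perm_exists[OF f h] by blast
      then have "\<exists>p. bij p \<and> p ` D = Einf_deg1"
        by (intro exI[of _ p]) (simp add: Einf_deg1_def)
      then show ?thesis by (intro disjI1)
    qed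
  qed
qed

lemma hom_one_bij: assumes f: "galg_hom f" and b: "bij_betw f gE gE" shows "f gone = (gone :: 'a::field grass)"
proof -
  have fe: "f ` gE = gE" using b unfolding bij_betw_def by (rule conjunct2)
  have "gone \<in> f ` gE" unfolding fe by (rule gone_gE)
  then obtain y where y: "y \<in> gE" "f y = gone" by (auto simp: image_iff)
  have f1: "f gone \<in> gE" using hom_gE[OF f gone_gE] .
  have "f gone = gmult (f gone) gone" by (rule gmult_one_right[OF f1, symmetric])
  also have "\<dots> = gmult (f gone) (f y)" by (rule arg_cong[where f="gmult (f gone)", OF y(2)[symmetric]])
  also have "\<dots> = f (gmult gone y)" by (rule hom_mult[OF f gone_gE y(1), symmetric])
  also have "\<dots> = gone" by (subst gmult_one_left[OF y(1)]) (rule y(2))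
  finally show ?thesis .
qed

lemma perm_conj:
  fixes p :: "nat \<Rightarrow> nat" and D D' :: "nat set"
  assumes bp: "bij p" and pD: "p ` D = D'"
  defines "P \<equiv> subst (\<lambda>i. ggen (p i)) :: 'a::field_char_0 grass \<Rightarrow> 'a grass"
  defines "P' \<equiv> subst (\<lambda>i. ggen (inv p i)) :: 'a grass \<Rightarrow> 'a grass"
  shows "galg_hom P" "galg_hom P'" "P gone = gone" "P' gone = gone"
    "\<And>x. x \<in> gE \<Longrightarrow> P (P' x) = x" "\<And>x. x \<in> gE \<Longrightarrow> P' (P x) = x"
    "\<And>x. x \<in> gE \<Longrightarrow> P (theta D x) = theta D' (P x)"
proof -
  show hP: "galg_hom P" unfolding P_def by (rule subst_hom) (auto simp: ggen_gE odd_ggen)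
  show hP': "galg_hom P'" unfolding P'_def by (rule subst_hom) (auto simp: ggen_gE odd_ggen)
  show P1: "P gone = gone" unfolding P_def by (rule subst_one)
  show P1': "P' gone = gone" unfolding P'_def by (rule subst_one)
  have Pg: "P (ggen i) = ggen (p i)" for i unfolding P_def by (simp add: subst_gen gmult_one_right ggen_gE)
  have Pg': "P' (ggen i) = ggen (inv p i)" for i unfolding P'_def by (simp add: subst_gen gmult_one_right ggen_gE)
  have inj: "inj p" using bp bij_is_inj by auto
  have sj: "surj p" using bp bij_is_surj by auto
  show "\<And>x. x \<in> gE \<Longrightarrow> P (P' x) = x"
    by (rule hom_inverse[OF hP hP' P1 P1']) (simp add: Pg Pg' surj_f_inv_f[OF sj])
  show "\<And>x. x \<in> gE \<Longrightarrow> P' (P x) = x"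
    by (rule hom_inverse[OF hP' hP P1' P1]) (simp add: Pg Pg' inv_f_f[OF inj])
  have mem: "p i \<in> D' \<longleftrightarrow> i \<in> D" for i
  proof
    assume "p i \<in> D'" then obtain j where "j \<in> D" "p j = p i" using pD by auto
    then show "i \<in> D" using inj by (metis injD)
  next
    assume "i \<in> D" then show "p i \<in> D'" using pD by auto
  qed
  show "\<And>x. x \<in> gE \<Longrightarrow> P (theta D x) = theta D' (P x)"
  proof (rule hom_agree[OF hom_comp[OF hP theta_hom] hom_comp[OF theta_hom hP]])
    show "P (theta D gone) = gone" by (simp add: theta_one P1)
    show "theta D' (P gone) = gone" by (simp add: theta_one P1)
    fix i
    show "P (theta D (ggen i)) = theta D' (P (ggen i))"
      by (simp add: theta_gen Pg tg_def hom_scale[OF hP ggen_gE] mem)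
  qed
qed

theorem mainTheorem6:
  fixes I Ip Im :: "nat set"
    and d :: "nat \<Rightarrow> 'a::field_char_0 grass"
    and \<phi> :: "'a grass \<Rightarrow> 'a grass"
  assumes "infinite I" and "I \<noteq> UNIV"
    and "Ip \<inter> Im = {}" and "Ip \<union> Im = I"
    and "\<forall>j. j \<notin> I \<longrightarrow> d j \<in> gE \<and>
           (\<forall>S. d j S \<noteq> 0 \<longrightarrow> odd (card S) \<and> S \<subseteq> I \<and> even (card (S \<inter> Im)))"
    and "galg_hom \<phi>" and "bij_betw \<phi> gE gE" and "\<forall>x\<in>gE. \<phi> (\<phi> x) = x"
    and "\<forall>i\<in>Ip. \<phi> (ggen i) = ggen i"
    and "\<forall>i\<in>Im. \<phi> (ggen i) = gscale (-1) (ggen i)"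
    and "\<forall>j. j \<notin> I \<longrightarrow> \<phi> (ggen j) = gadd (gscale (-1) (ggen j)) (gscale 2 (d j))"
  shows "z2_iso (Ephi0 \<phi>) (Ephi1 \<phi>) (hcomp0 Einf_deg1) (hcomp1 Einf_deg1)
      \<or> (\<exists>k. z2_iso (Ephi0 \<phi>) (Ephi1 \<phi>) (hcomp0 (Ekstar_deg1 k)) (hcomp1 (Ekstar_deg1 k)))
      \<or> (\<exists>k. z2_iso (Ephi0 \<phi>) (Ephi1 \<phi>) (hcomp0 (Ek_deg1 k)) (hcomp1 (Ek_deg1 k)))"
proof -
  note disj = assms(3) and un = assms(4) and dA = assms(5) and phom = assms(6) and pbij = assms(7)
    and pIp = assms(9) and pIm = assms(10) and pJ = assms(11)
  define D where "D = Im \<union> - I"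
  have dE: "d j \<in> gE" if "j \<notin> I" for j using dA that by blast
  have dO: "odd_el (d j)" if "j \<notin> I" for j using dA that by (auto simp: odd_el_def)
  have dS: "S \<subseteq> I" "even (card (S \<inter> Im))" if "j \<notin> I" "d j S \<noteq> 0" for j S
    using dA that by blast+
  define gc :: "'a \<Rightarrow> nat \<Rightarrow> 'a grass" where
    "gc = (\<lambda>c i. if i \<in> I then ggen i else gadd (ggen i) (gscale c (d i)))"
  have gcE: "gc c i \<in> gE" for c i
    unfolding gc_def using dE by (auto simp: ggen_gE gadd_gE gscale_gE)
  have gcO: "odd_el (gc c i)" for c i
    unfolding gc_def using dO by (auto simp: odd_ggen odd_add odd_scale)
  define psi where "psi = (\<lambda>c. subst (gc c))"
  have psi_hom: "galg_hom (psi c)" for c unfolding psi_def by (rule subst_hom[OF gcE gcO])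
  have psi_one: "psi c gone = gone" for c unfolding psi_def by (rule subst_one)
  have psi_gen: "psi c (ggen i) = gc c i" for c i
    unfolding psi_def by (simp add: subst_gen gmult_one_right gcE)
  have psi_fix: "psi c x = x" if x: "x \<in> gE" and xI: "\<And>S. x S \<noteq> 0 \<Longrightarrow> S \<subseteq> I" for c x
  proof -
    have "Gs (gc c) S = Gs ggen S" if "S \<in> supp x" for S
    proof (rule Gs_cong)
      fix i assume "i \<in> S"
      then have "i \<in> I" using xI that by (auto simp: supp_def)
      then show "gc c i = ggen i" by (simp add: gc_def)
    qed
    then have "psi c x = subst ggen x"
      unfolding psi_def subst_def lc_def by (intro ext sum.cong refl) simp
    then show ?thesis using subst_ggen_id[OF x] by simp
  qed
  have psi_d: "psi c (d j) = d j" if "j \<notin> I" for c j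
    by (rule psi_fix[OF dE[OF that]]) (use dS(1) that in blast)
  have psi_inv: "psi c (psi (- c) x) = x" if "x \<in> gE" for c x
  proof (rule hom_inverse[OF psi_hom psi_hom psi_one psi_one _ that])
    fix i
    show "psi c (psi (- c) (ggen i)) = ggen i"
    proof (cases "i \<in> I")
      case True then show ?thesis by (simp add: psi_gen gc_def)
    next
      case False
      have "psi c (psi (- c) (ggen i)) = psi c (gadd (ggen i) (gscale (- c) (d i)))"
        using False by (simp add: psi_gen gc_def)
      also have "\<dots> = gadd (gc c i) (gscale (- c) (d i))"
        using False by (simp add: hom_add[OF psi_hom ggen_gE gscale_gE[OF dE]] hom_scale[OF psi_hom dE] psi_gen psi_d)
      also have "\<dots> = ggen i" using False by (simp add: gc_def gadd_def gscale_def fun_eq_iff)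
      finally show ?thesis .
    qed
  qed
  have phiE: "\<phi> x \<in> gE" if "x \<in> gE" for x using hom_gE[OF phom that] .
  have phi_one: "\<phi> gone = gone" by (rule hom_one_bij[OF phom pbij])
  have thD: "theta D (d j) = d j" if j: "j \<notin> I" for j
  proof (rule ext)
    fix U
    show "theta D (d j) U = d j U"
    proof (cases "d j U = 0")
      case True then show ?thesis using theta_formula[OF dE[OF j], of D U] by simp
    next
      case False
      have "U \<inter> D = U \<inter> Im" using dS(1)[OF j False] by (auto simp: D_def)
      then have "even (card (U \<inter> D))" using dS(2)[OF j False] by simp
      then show ?thesis using theta_formula[OF dE[OF j], of D U] by simp
    qed
  qed
  have gen: "psi 1 (\<phi> (ggen i)) = theta D (psi 1 (ggen i))" for i
  proof (cases "i \<in> I")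
    case True
    then consider "i \<in> Ip" | "i \<in> Im" using un by auto
    then show ?thesis
    proof cases
      case 1
      have "i \<notin> D" using 1 disj True by (auto simp: D_def)
      then show ?thesis using 1 True pIp by (simp add: psi_gen gc_def theta_gen tg_def gscale_one)
    next
      case 2
      have "i \<in> D" using 2 by (simp add: D_def)
      then show ?thesis using 2 True pIm
        by (simp add: psi_gen gc_def theta_gen tg_def hom_scale[OF psi_hom ggen_gE])
    qed
  next
    case False
    have iD: "i \<in> D" using False by (simp add: D_def)
    have a: "psi 1 (\<phi> (ggen i)) = gadd (gscale (-1) (gc 1 i)) (gscale 2 (d i))"
      using False pJ by (simp add: hom_add[OF psi_hom gscale_gE[OF ggen_gE] gscale_gE[OF dE]]
          hom_scale[OF psi_hom ggen_gE] hom_scale[OF psi_hom dE] psi_gen psi_d)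
    have b: "theta D (psi 1 (ggen i)) = gadd (gscale (-1) (ggen i)) (gscale 1 (d i))"
      using False iD by (simp add: psi_gen gc_def hom_add[OF theta_hom ggen_gE gscale_gE[OF dE]]
          hom_scale[OF theta_hom dE] theta_gen tg_def thD)
    have e: "gadd (gscale (-1) (gc 1 i)) (gscale 2 (d i)) = gadd (gscale (-1) (ggen i)) (gscale 1 (d i))"
      using False by (simp add: gc_def gadd_def gscale_def fun_eq_iff algebra_simps)
    show ?thesis by (simp only: a b e)
  qed
  have conj1: "psi 1 (\<phi> x) = theta D (psi 1 x)" if "x \<in> gE" for x
    by (rule hom_agree[OF hom_comp[OF psi_hom phom] hom_comp[OF theta_hom psi_hom] _ _ gen that])
       (simp_all add: phi_one psi_one theta_one)
  have key: "z2_iso (Ephi0 \<phi>) (Ephi1 \<phi>) (hcomp0 D') (hcomp1 D')" if bp: "bij p" and pD: "p ` D = D'" for p D'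
  proof -
    define P where "P = (subst (\<lambda>i. ggen (p i)) :: 'a grass \<Rightarrow> 'a grass)"
    define P' where "P' = (subst (\<lambda>i. ggen (inv p i)) :: 'a grass \<Rightarrow> 'a grass)"
    have hP: "galg_hom P" unfolding P_def by (rule perm_conj(1)[OF bp pD])
    have hP': "galg_hom P'" unfolding P'_def by (rule perm_conj(2)[OF bp pD])
    have PP': "P (P' x) = x" if "x \<in> gE" for x unfolding P_def P'_def by (rule perm_conj(5)[OF bp pD that])
    have P'P: "P' (P x) = x" if "x \<in> gE" for x unfolding P_def P'_def by (rule perm_conj(6)[OF bp pD that])
    have Pth: "P (theta D x) = theta D' (P x)" if "x \<in> gE" for x unfolding P_def by (rule perm_conj(7)[OF bp pD that])
    show ?thesis
    proof (rule z2_conj[where Psi = "\<lambda>x. P (psi 1 x)" and Psi' = "\<lambda>y. psi (-1) (P' y)"])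
      show "galg_hom (\<lambda>x. P (psi 1 x))" by (rule hom_comp[OF hP psi_hom])
      show "\<And>y. y \<in> gE \<Longrightarrow> psi (-1) (P' y) \<in> gE" by (rule hom_gE[OF psi_hom hom_gE[OF hP']])
      show "\<And>y. y \<in> gE \<Longrightarrow> P (psi 1 (psi (-1) (P' y))) = y"
        using psi_inv[of _ 1] PP' hom_gE[OF hP'] by simp
      show "\<And>x. x \<in> gE \<Longrightarrow> psi (-1) (P' (P (psi 1 x))) = x"
        using psi_inv[of _ "-1"] P'P hom_gE[OF psi_hom] by simp
      show "\<And>x. x \<in> gE \<Longrightarrow> \<phi> x \<in> gE" by (rule phiE)
      show "\<And>x. x \<in> gE \<Longrightarrow> P (psi 1 (\<phi> x)) = theta D' (P (psi 1 x))"
        using conj1 Pth hom_gE[OF psi_hom] by simp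
    qed
  qed
  from perm_choice[of D] show ?thesis using key by blast
qed

end
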